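(* Let $n$ be a positive integer and let $f\colon\{0,1\}^n\to\mathbb{R}$ be any function with a unique global minimum. Then the expected optimization time of the (1+1)~EA minimizing $f$ is at least the expected optimization time of the (1+1)~EA minimizing $\textsc{OneMax}(x)=\sum_{i=1}^n x_i$ on $\{0,1\}^n$, i.e. $\mathrm{E}[T_f]\ge\mathrm{E}[T_{\textsc{OneMax}}]$.
   Context: The (1+1)~EA minimizing $f\colon\{0,1\}^n\to\mathbb{R}$: choose $x^{(0)}\in\{0,1\}^n$ uniformly at random; for $t=0,1,2,\dots$, sample $y^{(t)}$ by flipping each bit of $x^{(t)}$ independently with probability $1/n$; set $x^{(t+1)}:=y^{(t)}$ if $f(y^{(t)})\le f(x^{(t)})$ and $x^{(t+1)}:=x^{(t)}$ otherwise. The optimization time is the random variable $T_f=\min\{t\in\mathbb{N}: f(x^{(t)})=\min_{z\in\{0,1\}^n}f(z)\}$. *)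

theory Defs
  imports "HOL-Probability.Probability"
begin

text \<open>Search space: bit strings of length n, represented as bool lists (True = 1).\<close>
definition bitstrings :: "nat \<Rightarrow> bool list set" where
  "bitstrings n = {xs. length xs = n}"

primrec mutate :: "real \<Rightarrow> bool list \<Rightarrow> bool list pmf" where
  "mutate p [] = return_pmf []"
| "mutate p (b # bs) =
     bind_pmf (bernoulli_pmf p) (\<lambda>c.
     bind_pmf (mutate p bs) (\<lambda>r.
     return_pmf ((if c then \<not> b else b) # r)))"

definition ea_step :: "(bool list \<Rightarrow> real) \<Rightarrow> nat \<Rightarrow> bool list \<Rightarrow> bool list pmf" where
  "ea_step f n x =
     bind_pmf (mutate (1 / real n) x) (\<lambda>y. return_pmf (if f y \<le> f x then y else x))"

primrec ea_traj :: "(bool list \<Rightarrow> real) \<Rightarrow> nat \<Rightarrow> nat \<Rightarrow> bool list list pmf" where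
  "ea_traj f n 0 = map_pmf (\<lambda>x. [x]) (pmf_of_set (bitstrings n))"
| "ea_traj f n (Suc t) =
     bind_pmf (ea_traj f n t) (\<lambda>xs.
     map_pmf (\<lambda>y. xs @ [y]) (ea_step f n (last xs)))"

definition opt_value :: "(bool list \<Rightarrow> real) \<Rightarrow> nat \<Rightarrow> real" where
  "opt_value f n = Min (f ` bitstrings n)"

text \<open>Expected optimization time E[T_f] via the tail-sum formula
  E[T] = sum_{t>=0} Pr[T > t], where T > t iff none of x(0..t) is optimal
  (value in ennreal, possibly infinite).\<close>
definition expected_opt_time :: "(bool list \<Rightarrow> real) \<Rightarrow> nat \<Rightarrow> ennreal" where
  "expected_opt_time f n =
     (\<Sum>t. ennreal (measure_pmf.prob (ea_traj f n t)
                      {xs. \<forall>x\<in>set xs. f x \<noteq> opt_value f n}))"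

definition onemax :: "bool list \<Rightarrow> real" where
  "onemax xs = real (length (filter id xs))"

end

theory Submission
  imports Defs
begin


lemma integral_bind_pmf_bdd:
  fixes f :: "'b \<Rightarrow> real" assumes "\<And>x. \<bar>f x\<bar> \<le> B"
  shows "integral\<^sup>L (bind_pmf M N) f = (\<integral>x. integral\<^sup>L (N x) f \<partial>M)"
  unfolding measure_pmf_bind
  apply (rule integral_bind[where K="count_space UNIV" and B=B and B'=1])
  using assms apply (auto simp: measure_pmf.emeasure_space_1 measure_pmf_in_subprob_algebra)
  done

lemma integrable01:
  fixes g :: "'a \<Rightarrow> real"
  assumes "\<And>x. 0 \<le> g x \<and> g x \<le> 1"
  shows "integrable (measure_pmf M) g"
  apply (rule measure_pmf.integrable_const_bound[where B=1])
  using assms by auto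

lemma exp01:
  fixes g :: "'a \<Rightarrow> real"
  assumes "\<And>x. 0 \<le> g x \<and> g x \<le> 1"
  shows "0 \<le> measure_pmf.expectation M g \<and> measure_pmf.expectation M g \<le> 1"
proof
  show "0 \<le> measure_pmf.expectation M g" using assms by (simp add: integral_nonneg)
  have "measure_pmf.expectation M g \<le> measure_pmf.expectation M (\<lambda>_. 1)"
    by (rule integral_mono) (use assms integrable01[OF assms] in auto)
  then show "measure_pmf.expectation M g \<le> 1" by simp
qed

lemma exp_mono:
  fixes f g :: "'a \<Rightarrow> real"
  assumes "\<And>x. 0 \<le> f x \<and> f x \<le> 1" "\<And>x. 0 \<le> g x \<and> g x \<le> 1"
    and "\<And>x. x \<in> set_pmf M \<Longrightarrow> f x \<le> g x"
  shows "measure_pmf.expectation M f \<le> measure_pmf.expectation M g"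
  apply (rule integral_mono_AE)
  using integrable01[OF assms(1)] integrable01[OF assms(2)] assms(3) by (auto intro: AE_pmfI)

lemma exp_cong:
  fixes f g :: "'a \<Rightarrow> real"
  assumes "\<And>x. x \<in> set_pmf M \<Longrightarrow> f x = g x"
  shows "measure_pmf.expectation M f = measure_pmf.expectation M g"
  apply (rule integral_cong_AE)
  using assms by (auto intro: AE_pmfI)

fun ham :: "bool list \<Rightarrow> bool list \<Rightarrow> nat" where
  "ham (a # as) (b # bs) = (if a \<noteq> b then 1 else 0) + ham as bs"
| "ham _ _ = 0"

lemma ham_le: "ham xs ys \<le> length xs"
  by (induction xs ys rule: ham.induct) auto

lemma ham_0_iff: "length xs = length ys \<Longrightarrow> ham xs ys = 0 \<longleftrightarrow> xs = ys"
  by (induction xs ys rule: ham.induct) auto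

fun cntD :: "real \<Rightarrow> nat \<Rightarrow> nat \<Rightarrow> nat pmf" where
  "cntD p (Suc a) b = bind_pmf (bernoulli_pmf p) (\<lambda>c. map_pmf (\<lambda>k. k + (if c then 0 else 1)) (cntD p a b))"
| "cntD p 0 (Suc b) = bind_pmf (bernoulli_pmf p) (\<lambda>c. map_pmf (\<lambda>k. k + (if c then 1 else 0)) (cntD p 0 b))"
| "cntD p 0 0 = return_pmf 0"

lemma cntD_zero: "cntD p a (Suc b) = bind_pmf (bernoulli_pmf p) (\<lambda>c. map_pmf (\<lambda>k. k + (if c then 1 else 0)) (cntD p a b))"
proof (induction a)
  case 0 then show ?case by simp
next
  case (Suc a)
  have "cntD p (Suc a) (Suc b) = bind_pmf (bernoulli_pmf p) (\<lambda>c. bind_pmf (bernoulli_pmf p) (\<lambda>c'.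
           map_pmf (\<lambda>k. k + (if c' then 1 else 0) + (if c then 0 else 1)) (cntD p a b)))"
    by (simp add: Suc map_bind_pmf map_pmf_comp)
  also have "\<dots> = bind_pmf (bernoulli_pmf p) (\<lambda>c'. bind_pmf (bernoulli_pmf p) (\<lambda>c.
           map_pmf (\<lambda>k. k + (if c' then 1 else 0) + (if c then 0 else 1)) (cntD p a b)))"
    by (rule bind_commute_pmf)
  also have "\<dots> = bind_pmf (bernoulli_pmf p) (\<lambda>c. map_pmf (\<lambda>k. k + (if c then 1 else 0)) (cntD p (Suc a) b))"
    by (simp add: map_bind_pmf map_pmf_comp add_ac)
  finally show ?case .
qed

lemma mutate_length: "y \<in> set_pmf (mutate p x) \<Longrightarrow> length y = length x"
  by (induction x arbitrary: y) auto

lemma mutate_ham: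
  assumes "length x = length z"
  shows "map_pmf (\<lambda>y. ham y z) (mutate p x) = cntD p (ham x z) (length x - ham x z)"
  using assms
proof (induction x arbitrary: z)
  case Nil then show ?case by simp
next
  case (Cons b bs)
  then obtain c cs where z: "z = c # cs" and len: "length bs = length cs" by (cases z) auto
  have IH: "map_pmf (\<lambda>y. ham y cs) (mutate p bs) = cntD p (ham bs cs) (length bs - ham bs cs)"
    using Cons.IH len by simp
  have hl: "ham bs cs \<le> length bs" by (rule ham_le)
  have "map_pmf (\<lambda>y. ham y z) (mutate p (b # bs)) =
     bind_pmf (bernoulli_pmf p) (\<lambda>c'. map_pmf (\<lambda>k. (if (if c' then \<not> b else b) \<noteq> c then 1 else 0) + k)
        (map_pmf (\<lambda>y. ham y cs) (mutate p bs)))"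
    by (simp add: z map_bind_pmf map_pmf_comp bind_return_pmf map_pmf_def[symmetric] bind_map_pmf)
  also have "\<dots> = cntD p (ham (b # bs) z) (length (b # bs) - ham (b # bs) z)"
  proof (cases "b = c")
    case True
    have e: "length (b # bs) - ham (b # bs) z = Suc (length bs - ham bs cs)"
      using hl True z by simp
    show ?thesis unfolding e cntD_zero IH using True z
      by (intro bind_pmf_cong refl) (auto intro!: map_pmf_cong)
  next
    case False
    have e: "length (b # bs) - ham (b # bs) z = length bs - ham bs cs" "ham (b # bs) z = Suc (ham bs cs)"
      using False z by auto
    show ?thesis unfolding e cntD.simps IH using False z
      by (intro bind_pmf_cong refl) (auto intro!: map_pmf_cong)
  qed
  finally show ?case .
qed



primrec hh :: "real \<Rightarrow> nat \<Rightarrow> nat \<Rightarrow> nat \<Rightarrow> real" where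
  "hh p n 0 d = (if d > 0 then 1 else 0)"
| "hh p n (Suc t) d = (if d > 0 then measure_pmf.expectation (cntD p d (n - d)) (\<lambda>k. hh p n t (min d k)) else 0)"

lemma hh01: "0 \<le> hh p n t d \<and> hh p n t d \<le> 1"
proof (induction t arbitrary: d)
  case 0 then show ?case by simp
next
  case (Suc t) then show ?case using exp01[of "\<lambda>k. hh p n t (min d k)"] by simp
qed

lemma mono_range:
  fixes f :: "nat \<Rightarrow> real"
  assumes "\<And>d. d < n \<Longrightarrow> f d \<le> f (Suc d)" "a \<le> b" "b \<le> n"
  shows "f a \<le> f b"
  using assms(2,3)
proof (induction b rule: dec_induct)
  case base then show ?case by simp
next
  case (step m) then show ?case using assms(1)[of m] by simp
qed

lemma exp_bern_shift:
  assumes "0 \<le> p" "p \<le> 1" "\<And>k. 0 \<le> g k \<and> g k \<le> 1"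
  shows "measure_pmf.expectation (bind_pmf (bernoulli_pmf p) (\<lambda>c. map_pmf (\<lambda>k. k + (if c then u else v)) Y)) g
     = p * measure_pmf.expectation Y (\<lambda>k. g (k + u)) + (1 - p) * measure_pmf.expectation Y (\<lambda>k. g (k + v))"
proof -
  have b: "\<bar>g k\<bar> \<le> 1" for k using assms(3)[of k] by simp
  show ?thesis
    apply (subst integral_bind_pmf_bdd[where B=1])
    using b assms by (auto simp: mult.commute)
qed

lemma hh_mono_step:
  assumes "0 \<le> p" "p \<le> 1" "2 \<le> n \<Longrightarrow> p \<le> 1/2"
  shows "d < n \<Longrightarrow> hh p n t d \<le> hh p n t (Suc d)"
proof (induction t arbitrary: d)
  case 0 then show ?case by simp
next
  case (Suc t)
  show ?case
  proof (cases "d = 0")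
    case True then show ?thesis using hh01[of p n "Suc t" "Suc d"] by simp
  next
    case False
    then have p2: "p \<le> 1/2" using Suc.prems assms(3) by simp
    define b where "b = n - Suc d"
    have nd: "n - d = Suc b" "n - Suc d = b" using Suc.prems b_def by auto
    define Y where "Y = cntD p d b"
    define g where "g k = hh p n t (min d k)" for k
    define g' where "g' k = hh p n t (min (Suc d) k)" for k
    have mono: "hh p n t a \<le> hh p n t a'" if "a \<le> a'" "a' \<le> n" for a a'
      using mono_range[of n "hh p n t", OF Suc.IH] that by blast
    have g01: "0 \<le> g k \<and> g k \<le> 1" "0 \<le> g' k \<and> g' k \<le> 1" for k
      unfolding g_def g'_def using hh01 by auto
    have gg: "(\<lambda>k. hh p n t (min d k)) = g" "(\<lambda>k. hh p n t (min (Suc d) k)) = g'"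
      unfolding g_def g'_def by auto
    have L: "hh p n (Suc t) d = p * measure_pmf.expectation Y (\<lambda>k. g (k + 1)) + (1 - p) * measure_pmf.expectation Y (\<lambda>k. g (k + 0))"
    proof -
      have "hh p n (Suc t) d = measure_pmf.expectation (cntD p d (Suc b)) g"
        using False nd gg by simp
      also have "\<dots> = p * measure_pmf.expectation Y (\<lambda>k. g (k + 1)) + (1 - p) * measure_pmf.expectation Y (\<lambda>k. g (k + 0))"
        unfolding cntD_zero Y_def by (rule exp_bern_shift) (use assms g01 in auto)
      finally show ?thesis .
    qed
    have R: "hh p n (Suc t) (Suc d) = p * measure_pmf.expectation Y (\<lambda>k. g' (k + 0)) + (1 - p) * measure_pmf.expectation Y (\<lambda>k. g' (k + 1))"
    proof -
      have "hh p n (Suc t) (Suc d) = measure_pmf.expectation (cntD p (Suc d) b) g'"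
        using nd gg by simp
      also have "\<dots> = p * measure_pmf.expectation Y (\<lambda>k. g' (k + 0)) + (1 - p) * measure_pmf.expectation Y (\<lambda>k. g' (k + 1))"
        unfolding cntD.simps Y_def by (rule exp_bern_shift) (use assms g01 in auto)
      finally show ?thesis .
    qed
    define A where "A = measure_pmf.expectation Y (\<lambda>k. g (k + 1))"
    define B where "B = measure_pmf.expectation Y (\<lambda>k. g (k + 0))"
    define A' where "A' = measure_pmf.expectation Y (\<lambda>k. g' (k + 1))"
    define B' where "B' = measure_pmf.expectation Y (\<lambda>k. g' (k + 0))"
    have BA: "B \<le> A" unfolding A_def B_def
      by (rule exp_mono) (use g01 hh01 Suc.prems in \<open>auto simp: g_def intro!: mono\<close>)
    have AA: "A \<le> A'" unfolding A_def A'_def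
      by (rule exp_mono) (use g01 hh01 Suc.prems in \<open>auto simp: g_def g'_def intro!: mono\<close>)
    have BB: "B \<le> B'" unfolding B'_def B_def
      by (rule exp_mono) (use g01 hh01 Suc.prems in \<open>auto simp: g_def g'_def intro!: mono\<close>)
    have "0 \<le> (1 - 2 * p) * (A - B)" using p2 BA by simp
    moreover have "(1 - p) * A \<le> (1 - p) * A'" using AA assms by (intro mult_left_mono) auto
    moreover have "p * B \<le> p * B'" using BB assms by (intro mult_left_mono) auto
    ultimately have "p * A + (1 - p) * B \<le> p * B' + (1 - p) * A'" by (simp add: algebra_simps)
    then show ?thesis using L R A_def B_def A'_def B'_def by simp
  qed
qed

lemma hh_mono:
  assumes "0 \<le> p" "p \<le> 1" "2 \<le> n \<Longrightarrow> p \<le> 1/2" "a \<le> b" "b \<le> n"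
  shows "hh p n t a \<le> hh p n t b"
  using mono_range[of n "hh p n t", OF hh_mono_step[OF assms(1-3)]] assms(4,5) by blast



primrec trj :: "(bool list \<Rightarrow> real) \<Rightarrow> nat \<Rightarrow> bool list pmf \<Rightarrow> nat \<Rightarrow> bool list list pmf" where
  "trj f n \<mu> 0 = map_pmf (\<lambda>x. [x]) \<mu>"
| "trj f n \<mu> (Suc t) = bind_pmf (trj f n \<mu> t) (\<lambda>xs. map_pmf (\<lambda>y. xs @ [y]) (ea_step f n (last xs)))"

lemma ea_traj_trj: "ea_traj f n t = trj f n (pmf_of_set (bitstrings n)) t"
  by (induction t) auto

lemma trj_nonempty: "xs \<in> set_pmf (trj f n \<mu> t) \<Longrightarrow> xs \<noteq> []"
  by (induction t arbitrary: xs) auto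

lemma trj_Suc: "trj f n \<mu> (Suc t) = bind_pmf \<mu> (\<lambda>x. map_pmf (Cons x) (trj f n (ea_step f n x) t))"
proof (induction t)
  case 0 then show ?case by (simp add: bind_map_pmf map_pmf_comp)
next
  case (Suc t)
  have "trj f n \<mu> (Suc (Suc t)) = bind_pmf \<mu> (\<lambda>x. bind_pmf (trj f n (ea_step f n x) t)
          (\<lambda>ys. map_pmf (\<lambda>y. (x # ys) @ [y]) (ea_step f n (last (x # ys)))))"
    by (simp only: trj.simps(2)[of f n \<mu> "Suc t"] Suc bind_assoc_pmf bind_map_pmf)
  also have "\<dots> = bind_pmf \<mu> (\<lambda>x. map_pmf (Cons x) (trj f n (ea_step f n x) (Suc t)))"
    by (auto simp: map_bind_pmf map_pmf_comp intro!: bind_pmf_cong dest: trj_nonempty)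
  finally show ?case .
qed

definition okset :: "(bool list \<Rightarrow> real) \<Rightarrow> nat \<Rightarrow> bool list list set" where
  "okset f n = {xs. \<forall>x\<in>set xs. f x \<noteq> opt_value f n}"

primrec surv :: "(bool list \<Rightarrow> real) \<Rightarrow> nat \<Rightarrow> nat \<Rightarrow> bool list \<Rightarrow> real" where
  "surv f n 0 x = (if f x \<noteq> opt_value f n then 1 else 0)"
| "surv f n (Suc t) x = (if f x \<noteq> opt_value f n then measure_pmf.expectation (ea_step f n x) (surv f n t) else 0)"

lemma surv01: "0 \<le> surv f n t x \<and> surv f n t x \<le> 1"
proof (induction t arbitrary: x)
  case 0 then show ?case by simp
next
  case (Suc t) then show ?case using exp01[of "surv f n t"] by simp
qed

lemma prob_trj: "measure_pmf.prob (trj f n \<mu> t) (okset f n) = measure_pmf.expectation \<mu> (surv f n t)"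
proof (induction t arbitrary: \<mu>)
  case 0
  have "measure_pmf.prob (trj f n \<mu> 0) (okset f n) = measure_pmf.prob \<mu> {x. f x \<noteq> opt_value f n}"
    by (simp add: okset_def vimage_def)
  also have "\<dots> = measure_pmf.expectation \<mu> (indicator {x. f x \<noteq> opt_value f n})"
    by simp
  also have "\<dots> = measure_pmf.expectation \<mu> (surv f n 0)"
    by (rule arg_cong[where f="measure_pmf.expectation \<mu>"]) (auto simp: indicator_def)
  finally show ?case .
next
  case (Suc t)
  have "measure_pmf.prob (trj f n \<mu> (Suc t)) (okset f n)
     = measure_pmf.expectation (trj f n \<mu> (Suc t)) (indicator (okset f n))" by simp
  also have "\<dots> = measure_pmf.expectation \<mu> (\<lambda>x. measure_pmf.expectation (map_pmf (Cons x) (trj f n (ea_step f n x) t)) (indicator (okset f n)))"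
    unfolding trj_Suc by (rule integral_bind_pmf_bdd[where B=1]) (auto simp: indicator_def)
  also have "\<dots> = measure_pmf.expectation \<mu> (surv f n (Suc t))"
  proof (rule arg_cong[where f="measure_pmf.expectation \<mu>"], rule ext)
    fix x
    have "measure_pmf.expectation (map_pmf (Cons x) (trj f n (ea_step f n x) t)) (indicator (okset f n))
       = measure_pmf.prob (trj f n (ea_step f n x) t) (Cons x -` okset f n)"
      by simp
    also have "\<dots> = (if f x \<noteq> opt_value f n then measure_pmf.prob (trj f n (ea_step f n x) t) (okset f n) else 0)"
      by (auto simp: okset_def vimage_def)
    also have "\<dots> = surv f n (Suc t) x" using Suc by simp
    finally show "measure_pmf.expectation (map_pmf (Cons x) (trj f n (ea_step f n x) t)) (indicator (okset f n)) = surv f n (Suc t) x" .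
  qed
  finally show ?case .
qed

lemma prob_ea_traj: "measure_pmf.prob (ea_traj f n t) {xs. \<forall>x\<in>set xs. f x \<noteq> opt_value f n}
   = measure_pmf.expectation (pmf_of_set (bitstrings n)) (surv f n t)"
  using prob_trj[of f n "pmf_of_set (bitstrings n)" t] by (simp add: ea_traj_trj okset_def)



lemma ea_step_map: "ea_step f n x = map_pmf (\<lambda>y. if f y \<le> f x then y else x) (mutate (1 / real n) x)"
  unfolding ea_step_def map_pmf_def by simp

lemma finite_bitstrings: "finite (bitstrings n)"
proof -
  have "finite {xs. set xs \<subseteq> (UNIV :: bool set) \<and> length xs = n}"
    by (rule finite_lists_length_eq) simp
  then show ?thesis unfolding bitstrings_def by simp
qed

lemma bitstrings_ne: "bitstrings n \<noteq> {}"
  unfolding bitstrings_def by (auto intro!: exI[of _ "replicate n False"])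

lemma p_props:
  assumes "n > 0"
  shows "0 \<le> 1 / real n" "1 / real n \<le> 1" "2 \<le> n \<Longrightarrow> 1 / real n \<le> 1/2"
  using assms by (auto simp: field_simps)

lemma lowerA:
  assumes n: "n > 0" and z: "z \<in> bitstrings n"
    and okiff: "\<And>x. x \<in> bitstrings n \<Longrightarrow> (f x \<noteq> opt_value f n) = (x \<noteq> z)"
  shows "x \<in> bitstrings n \<Longrightarrow> hh (1 / real n) n t (ham x z) \<le> surv f n t x"
proof (induction t arbitrary: x)
  case 0
  have "ham x z = 0 \<longleftrightarrow> x = z" using 0 z by (intro ham_0_iff) (auto simp: bitstrings_def)
  then show ?case using okiff[OF 0] by auto
next
  case (Suc t)
  let ?p = "1 / real n"
  have lx: "length x = n" "length z = n" using Suc.prems z by (auto simp: bitstrings_def)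
  show ?case
  proof (cases "x = z")
    case True
    have "ham x z = 0" using True ham_0_iff[of z z] by simp
    moreover have "\<not> (f x \<noteq> opt_value f n)" using okiff[OF z] True by simp
    ultimately show ?thesis by simp
  next
    case False
    define d where "d = ham x z"
    have d0: "d > 0" using ham_0_iff[of x z] lx False d_def by simp
    have dn: "d \<le> n" using ham_le[of x z] lx d_def by simp
    let ?sel = "\<lambda>y. if f y \<le> f x then y else x"
    have "hh ?p n (Suc t) d = measure_pmf.expectation (cntD ?p d (n - d)) (\<lambda>k. hh ?p n t (min d k))"
      using d0 by simp
    also have "\<dots> = measure_pmf.expectation (mutate ?p x) (\<lambda>y. hh ?p n t (min d (ham y z)))"
    proof -
      have "map_pmf (\<lambda>y. ham y z) (mutate ?p x) = cntD ?p d (n - d)"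
        using mutate_ham[of x z ?p] lx d_def by simp
      then have "measure_pmf.expectation (cntD ?p d (n - d)) (\<lambda>k. hh ?p n t (min d k)) =
        measure_pmf.expectation (map_pmf (\<lambda>y. ham y z) (mutate ?p x)) (\<lambda>k. hh ?p n t (min d k))" by simp
      then show ?thesis by simp
    qed
    also have "\<dots> \<le> measure_pmf.expectation (mutate ?p x) (\<lambda>y. surv f n t (?sel y))"
    proof (rule exp_mono)
      fix y assume y: "y \<in> set_pmf (mutate ?p x)"
      have ly: "?sel y \<in> bitstrings n" using mutate_length[OF y] lx by (auto simp: bitstrings_def)
      have "hh ?p n t (min d (ham y z)) \<le> hh ?p n t (ham (?sel y) z)"
        apply (rule hh_mono[OF p_props[OF n]])
        using ham_le[of y z] mutate_length[OF y] lx d_def dn by auto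
      also have "\<dots> \<le> surv f n t (?sel y)" using Suc.IH[OF ly] .
      finally show "hh ?p n t (min d (ham y z)) \<le> surv f n t (?sel y)" .
    qed (use hh01 surv01 in auto)
    also have "\<dots> = surv f n (Suc t) x"
      using okiff[OF Suc.prems] False by (simp add: ea_step_map)
    finally show ?thesis unfolding d_def .
  qed
qed

lemma ham_self[simp]: "ham x x = 0"
  by (induction x) auto

lemma ham_repl: "ham x (replicate (length x) False) = length (filter id x)"
  by (induction x) auto

lemma onemax_opt: "opt_value onemax n = 0"
proof -
  have "replicate n False \<in> bitstrings n" by (simp add: bitstrings_def)
  moreover have "onemax (replicate n False) = 0" by (simp add: onemax_def)
  moreover have "\<forall>x\<in>bitstrings n. 0 \<le> onemax x" by (simp add: onemax_def)
  ultimately show ?thesis unfolding opt_value_def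
    using finite_bitstrings by (intro Min_eqI) auto
qed

lemma onemax_ham: "length x = n \<Longrightarrow> onemax x = real (ham x (replicate n False))"
  using ham_repl[of x] by (simp add: onemax_def)

lemma exactB:
  assumes n: "n > 0"
  shows "x \<in> bitstrings n \<Longrightarrow> surv onemax n t x = hh (1 / real n) n t (ham x (replicate n False))"
proof (induction t arbitrary: x)
  case 0
  have "ham x (replicate n False) = 0 \<longleftrightarrow> x = replicate n False"
    using 0 by (intro ham_0_iff) (auto simp: bitstrings_def)
  moreover have "onemax x = real (ham x (replicate n False))"
    using 0 onemax_ham[of x n] by (simp add: bitstrings_def)
  ultimately show ?case by (simp add: onemax_opt)
next
  case (Suc t)
  let ?p = "1 / real n"
  let ?z = "replicate n False"
  have lx: "length x = n" using Suc.prems by (auto simp: bitstrings_def)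
  define d where "d = ham x ?z"
  show ?case
  proof (cases "d = 0")
    case True
    then have "onemax x = 0" using onemax_ham[OF lx] d_def by simp
    then show ?thesis using True d_def by (simp add: onemax_opt)
  next
    case False
    then have om: "onemax x \<noteq> opt_value onemax n" using onemax_ham[OF lx] d_def by (simp add: onemax_opt)
    let ?sel = "\<lambda>y. if onemax y \<le> onemax x then y else x"
    have "surv onemax n (Suc t) x = measure_pmf.expectation (mutate ?p x) (\<lambda>y. surv onemax n t (?sel y))"
      using om by (simp add: ea_step_map)
    also have "\<dots> = measure_pmf.expectation (mutate ?p x) (\<lambda>y. hh ?p n t (min d (ham y ?z)))"
    proof (rule exp_cong)
      fix y assume y: "y \<in> set_pmf (mutate ?p x)"
      have ly: "length y = n" using mutate_length[OF y] lx by simp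
      have ls: "?sel y \<in> bitstrings n" using ly lx by (auto simp: bitstrings_def)
      have "ham (?sel y) ?z = min d (ham y ?z)"
        using onemax_ham[OF ly] onemax_ham[OF lx] d_def by auto
      then show "surv onemax n t (?sel y) = hh ?p n t (min d (ham y ?z))"
        using Suc.IH[OF ls] by simp
    qed
    also have "\<dots> = measure_pmf.expectation (cntD ?p d (n - d)) (\<lambda>k. hh ?p n t (min d k))"
    proof -
      have "map_pmf (\<lambda>y. ham y ?z) (mutate ?p x) = cntD ?p d (n - d)"
        using mutate_ham[of x ?z ?p] lx d_def by simp
      then have "measure_pmf.expectation (cntD ?p d (n - d)) (\<lambda>k. hh ?p n t (min d k)) =
        measure_pmf.expectation (map_pmf (\<lambda>y. ham y ?z) (mutate ?p x)) (\<lambda>k. hh ?p n t (min d k))" by simp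
      then show ?thesis by simp
    qed
    also have "\<dots> = hh ?p n (Suc t) d" using False by simp
    finally show ?thesis unfolding d_def .
  qed
qed



definition xorl :: "bool list \<Rightarrow> bool list \<Rightarrow> bool list" where
  "xorl x z = map2 (\<noteq>) x z"

lemma xorl_len: "length (xorl x z) = min (length x) (length z)"
  by (simp add: xorl_def)

lemma xorl_inv: "length x = length z \<Longrightarrow> xorl (xorl x z) z = x"
  unfolding xorl_def by (induction x z rule: list_induct2) auto

lemma xorl_ham0: "length x = length z \<Longrightarrow> ham (xorl x z) (replicate (length x) False) = ham x z"
  unfolding xorl_def by (induction x z rule: list_induct2) auto

lemma xorl_ham: "length x = n \<Longrightarrow> length z = n \<Longrightarrow> ham (xorl x z) (replicate n False) = ham x z"
  using xorl_ham0[of x z] by simp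

lemma sum_xor:
  assumes z: "z \<in> bitstrings n"
  shows "(\<Sum>x\<in>bitstrings n. g (ham x z)) = (\<Sum>x\<in>bitstrings n. g (ham x (replicate n False)))"
  apply (rule sum.reindex_bij_witness[where i="\<lambda>x. xorl x z" and j="\<lambda>x. xorl x z"])
  using z by (auto simp: bitstrings_def xorl_len xorl_inv xorl_ham)

lemma per_t:
  assumes n: "n > 0"
    and u: "\<exists>!z. z \<in> bitstrings n \<and> (\<forall>y\<in>bitstrings n. f z \<le> f y)"
  shows "measure_pmf.prob (ea_traj onemax n t) {xs. \<forall>x\<in>set xs. onemax x \<noteq> opt_value onemax n}
      \<le> measure_pmf.prob (ea_traj f n t) {xs. \<forall>x\<in>set xs. f x \<noteq> opt_value f n}"
proof -
  obtain z where z: "z \<in> bitstrings n" "\<forall>y\<in>bitstrings n. f z \<le> f y"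
    and uq: "\<And>w. w \<in> bitstrings n \<Longrightarrow> \<forall>y\<in>bitstrings n. f w \<le> f y \<Longrightarrow> w = z"
    using u by blast
  have opt: "opt_value f n = f z"
    unfolding opt_value_def using z finite_bitstrings by (intro Min_eqI) auto
  have okiff: "(f x \<noteq> opt_value f n) = (x \<noteq> z)" if x: "x \<in> bitstrings n" for x
  proof
    assume "f x \<noteq> opt_value f n" then show "x \<noteq> z" using opt by auto
  next
    assume "x \<noteq> z"
    show "f x \<noteq> opt_value f n"
    proof
      assume "f x = opt_value f n"
      then have "\<forall>y\<in>bitstrings n. f x \<le> f y" using z opt by simp
      then show False using uq[OF x] \<open>x \<noteq> z\<close> by blast
    qed
  qed
  let ?U = "pmf_of_set (bitstrings n)"
  let ?p = "1 / real n"
  have setU: "set_pmf ?U = bitstrings n" using finite_bitstrings bitstrings_ne by simp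
  have "measure_pmf.prob (ea_traj onemax n t) {xs. \<forall>x\<in>set xs. onemax x \<noteq> opt_value onemax n}
      = measure_pmf.expectation ?U (surv onemax n t)" by (rule prob_ea_traj)
  also have "\<dots> = measure_pmf.expectation ?U (\<lambda>x. hh ?p n t (ham x (replicate n False)))"
    by (rule exp_cong) (use exactB[OF n] setU in auto)
  also have "\<dots> = measure_pmf.expectation ?U (\<lambda>x. hh ?p n t (ham x z))"
    using sum_xor[OF z(1), of "hh ?p n t"] finite_bitstrings bitstrings_ne
    by (simp add: integral_pmf_of_set)
  also have "\<dots> \<le> measure_pmf.expectation ?U (surv f n t)"
    by (rule exp_mono) (use hh01 surv01 lowerA[OF n z(1) okiff] setU in auto)
  also have "\<dots> = measure_pmf.prob (ea_traj f n t) {xs. \<forall>x\<in>set xs. f x \<noteq> opt_value f n}"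
    by (rule prob_ea_traj[symmetric])
  finally show ?thesis .
qed

theorem theorem8:
  fixes n :: nat and f :: "bool list \<Rightarrow> real"
  assumes "n > 0"
    and "\<exists>!z. z \<in> bitstrings n \<and> (\<forall>y\<in>bitstrings n. f z \<le> f y)"
  shows "expected_opt_time f n \<ge> expected_opt_time onemax n"
  unfolding expected_opt_time_def
  by (intro suminf_le ennreal_leI per_t[OF assms]) auto


end
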